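(* Let $N$ be a node and let $f_N^{1}\le f_N^{2}\le\dots\le f_N^{|\Gamma|}$ be the ordered list of the scan periods set for $N$ by the monitors $M_1,\dots,M_{|\Gamma|}$. Then the longest time frame during which an error concerning a connection of $N$ (a connection $N\to P$ present in $E$ but absent from $E_{AToM}$, or vice versa) can exist in the global snapshot $G_{AToM}$ is $f_N^{\lfloor|\Gamma|/2\rfloor+1}$.
   Context: The network is a directed graph $G=(V,E)$ of nodes that changes over time ($N\to P$ denotes $(N,P)\in E$); $\Gamma$ is a set of monitors. Each monitor $M_i$ repeatedly executes a verification round $PeeV(N)$ for each node $N$, treated as an atomic event, which updates its local snapshot $E_{M_i}$ so that immediately after the round, $(N,P)\in E_{M_i}$ iff $(N,P)\in E$ for all $P$; consecutive rounds of $M_i$ for $N$ are separated by the scan period $f_N^{i}$. Between rounds, $E_{M_i}$ is not modified for connections of $N$. The global snapshot is $G_{AToM}=(V,E_{AToM})$ with $E_{AToM}=\{(A,B):|\{M\in\Gamma:(A,B)\in E_M\}|>|\Gamma|/2\}$, i.e. a connection is included iff it is in the local snapshots of a strict majority of monitors. *)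

theory Defs
  imports Complex_Main "HOL-Library.Multiset"
begin

text \<open>Time is modelled by the reals. Monitors are elements of a finite set Gamma of some type 'm,
  nodes have type 'v. The network evolves over time: E t is the edge set at time t.\<close>

text \<open>Times of the verification rounds of monitor i for the fixed node: monitor i runs its
  rounds periodically with scan period f i and phase phi i.\<close>
definition scan_times :: "('m \<Rightarrow> real) \<Rightarrow> ('m \<Rightarrow> real) \<Rightarrow> 'm \<Rightarrow> real set" where
  "scan_times f phi i = {phi i + real_of_int n * f i | n::int. True}"

text \<open>A run of the monitoring system for node N: at each round (atomic event) of monitor i,
  the local snapshot EM i agrees with E on all connections of N; between rounds the local
  snapshot is not modified for connections of N.\<close>
definition monitoring_run ::
  "'v set \<Rightarrow> 'm set \<Rightarrow> ('m \<Rightarrow> real) \<Rightarrow> ('m \<Rightarrow> real) \<Rightarrow> 'v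
    \<Rightarrow> (real \<Rightarrow> ('v \<times> 'v) set) \<Rightarrow> ('m \<Rightarrow> real \<Rightarrow> ('v \<times> 'v) set) \<Rightarrow> bool" where
  "monitoring_run V Gamma f phi N E EM \<longleftrightarrow>
     (\<forall>t. E t \<subseteq> V \<times> V) \<and>
     (\<forall>i\<in>Gamma. \<forall>s\<in>scan_times f phi i. \<forall>P. (N, P) \<in> EM i s \<longleftrightarrow> (N, P) \<in> E s) \<and>
     (\<forall>i\<in>Gamma. \<forall>s t. s \<le> t \<and> (\<forall>u\<in>scan_times f phi i. \<not> (s < u \<and> u \<le> t)) \<longrightarrow>
        (\<forall>P. (N, P) \<in> EM i t \<longleftrightarrow> (N, P) \<in> EM i s))"

definition atom_snapshot :: "'m set \<Rightarrow> ('m \<Rightarrow> real \<Rightarrow> ('v \<times> 'v) set) \<Rightarrow> real \<Rightarrow> ('v \<times> 'v) set" where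
  "atom_snapshot Gamma EM t =
     {(A, B). real (card {M \<in> Gamma. (A, B) \<in> EM M t}) > real (card Gamma) / 2}"

definition error_frame ::
  "'m set \<Rightarrow> 'v \<Rightarrow> (real \<Rightarrow> ('v \<times> 'v) set) \<Rightarrow> ('m \<Rightarrow> real \<Rightarrow> ('v \<times> 'v) set) \<Rightarrow> 'v
     \<Rightarrow> real \<Rightarrow> real \<Rightarrow> bool" where
  "error_frame Gamma N E EM P a b \<longleftrightarrow> a < b \<and>
     (\<exists>\<beta>. \<forall>t\<in>{a<..<b}. ((N, P) \<in> E t \<longleftrightarrow> \<beta>) \<and> ((N, P) \<in> atom_snapshot Gamma EM t \<longleftrightarrow> \<not> \<beta>))"

text \<open>The (floor(|Gamma|/2)+1)-th smallest scan period (1-based), i.e. index card Gamma div 2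
  (0-based) in the ascending sorted list of the periods of all monitors.\<close>
definition kth_period :: "'m set \<Rightarrow> ('m \<Rightarrow> real) \<Rightarrow> real" where
  "kth_period Gamma f = sorted_list_of_multiset (image_mset f (mset_set Gamma)) ! (card Gamma div 2)"

end

theory Submission
  imports Defs
begin

lemma count_eq:
  assumes "finite A"
  shows "card {a\<in>A. P (f a)} = length (filter P (sorted_list_of_multiset (image_mset f (mset_set A))))"
proof -
  have "length (filter P (sorted_list_of_multiset (image_mset f (mset_set A))))
      = size (filter_mset P (mset (sorted_list_of_multiset (image_mset f (mset_set A)))))"
    by (metis mset_filter size_mset)
  also have "\<dots> = size (filter_mset P (image_mset f (mset_set A)))" by simp
  also have "\<dots> = size (image_mset f (filter_mset (\<lambda>x. P (f x)) (mset_set A)))"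
    by (simp add: filter_mset_image_mset)
  also have "\<dots> = card {a\<in>A. P (f a)}" using assms by (simp add: filter_mset_mset_set)
  finally show ?thesis by simp
qed

lemma len_sorted: "length (sorted_list_of_multiset M) = size M"
  by (metis mset_sorted_list_of_multiset size_mset)

lemma sorted_le_count:
  fixes xs :: "real list"
  assumes "sorted xs" "k < length xs"
  shows "k + 1 \<le> length (filter (\<lambda>x. x \<le> xs ! k) xs)"
proof -
  have "filter (\<lambda>x. x \<le> xs ! k) (take (k+1) xs) = take (k+1) xs"
    using assms by (auto simp: filter_id_conv in_set_conv_nth sorted_nth_mono)
  hence "length (filter (\<lambda>x. x \<le> xs ! k) (take (k+1) xs)) = k+1" using assms by simp
  moreover have "filter (\<lambda>x. x \<le> xs ! k) xs = filter (\<lambda>x. x \<le> xs ! k) (take (k+1) xs) @ filter (\<lambda>x. x \<le> xs ! k) (drop (k+1) xs)"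
    by (metis append_take_drop_id filter_append)
  ultimately show ?thesis by simp
qed

lemma sorted_lt_count:
  fixes xs :: "real list"
  assumes "sorted xs" "k < length xs"
  shows "length (filter (\<lambda>x. x < xs ! k) xs) \<le> k"
proof -
  have "filter (\<lambda>x. x < xs ! k) (drop k xs) = []"
    using assms by (auto simp: filter_empty_conv in_set_conv_nth sorted_nth_mono not_less)
  moreover have "filter (\<lambda>x. x < xs ! k) xs = filter (\<lambda>x. x < xs ! k) (take k xs) @ filter (\<lambda>x. x < xs ! k) (drop k xs)"
    by (metis append_take_drop_id filter_append)
  ultimately have "length (filter (\<lambda>x. x < xs ! k) xs) = length (filter (\<lambda>x. x < xs ! k) (take k xs))" by simp
  also have "\<dots> \<le> length (take k xs)" by (rule length_filter_le)
  finally show ?thesis by simp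
qed

theorem theorem3:
  fixes V :: "'v set" and Gamma :: "'m set" and f :: "'m \<Rightarrow> real" and N :: 'v
  assumes "finite Gamma" and "Gamma \<noteq> {}" and "\<forall>i\<in>Gamma. f i > 0" and "N \<in> V"
  shows "(\<forall>phi E EM P a b. monitoring_run V Gamma f phi N E EM \<and> error_frame Gamma N E EM P a b
            \<longrightarrow> b - a \<le> kth_period Gamma f)
       \<and> (\<forall>P\<in>V. \<exists>phi E EM a b. monitoring_run V Gamma f phi N E EM \<and> error_frame Gamma N E EM P a b
            \<and> b - a = kth_period Gamma f)"
proof -
  define xs where "xs = sorted_list_of_multiset (image_mset f (mset_set Gamma))"
  define k where "k = card Gamma div 2"
  define fk where "fk = kth_period Gamma f"
  have fk: "fk = xs ! k" unfolding fk_def kth_period_def xs_def k_def by simp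
  have lenxs: "length xs = card Gamma" unfolding xs_def len_sorted by simp
  have cardpos: "card Gamma > 0" using assms(1,2) by (simp add: card_gt_0_iff)
  have klt: "k < length xs" using lenxs cardpos unfolding k_def by simp
  have sxs: "sorted xs" unfolding xs_def by simp
  have fkin: "fk \<in> f ` Gamma"
  proof -
    have "fk \<in> set xs" using fk klt by simp
    thus ?thesis unfolding xs_def using assms(1) by simp
  qed
  hence fkpos: "fk > 0" using assms(3) by auto
  have cle: "k + 1 \<le> card {i\<in>Gamma. f i \<le> fk}"
    using sorted_le_count[OF sxs klt] count_eq[OF assms(1), of "\<lambda>x. x \<le> fk" f]
    unfolding fk xs_def by simp
  have clt: "card {i\<in>Gamma. f i < fk} \<le> k"
    using sorted_lt_count[OF sxs klt] count_eq[OF assms(1), of "\<lambda>x. x < fk" f]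
    unfolding fk xs_def by simp
  have part1: "b - a \<le> fk" if run: "monitoring_run V Gamma f phi N E EM"
    and err: "error_frame Gamma N E EM P a b" for phi E EM P a b
  proof (rule ccontr)
    assume "\<not> b - a \<le> fk"
    hence gt: "b - a > fk" by simp
    from err obtain \<beta> where ab: "a < b" and
      beh: "\<forall>t\<in>{a<..<b}. ((N, P) \<in> E t \<longleftrightarrow> \<beta>) \<and> ((N, P) \<in> atom_snapshot Gamma EM t \<longleftrightarrow> \<not> \<beta>)"
      unfolding error_frame_def by blast
    define t where "t = (a + fk + b) / 2"
    have tin: "t \<in> {a<..<b}" using gt fkpos unfolding t_def by auto
    have tfk: "t - a > fk" using gt unfolding t_def by (simp add: field_simps)
    have agree: "(N, P) \<in> EM i t \<longleftrightarrow> \<beta>" if iG: "i \<in> Gamma" and fi: "f i \<le> fk" for i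
    proof -
      have fip: "f i > 0" using assms(3) iG by auto
      define n where "n = floor ((t - phi i) / f i)"
      define u where "u = phi i + real_of_int n * f i"
      have uscan: "u \<in> scan_times f phi i" unfolding scan_times_def u_def by blast
      have n1: "real_of_int n \<le> (t - phi i) / f i" unfolding n_def by simp
      have n2: "(t - phi i) / f i < real_of_int n + 1" unfolding n_def by linarith
      have ule: "u \<le> t" using n1 fip unfolding u_def by (simp add: field_simps)
      have ugt: "u > t - f i" using n2 fip unfolding u_def by (simp add: field_simps)
      have nos: "\<forall>v\<in>scan_times f phi i. \<not> (u < v \<and> v \<le> t)"
      proof
        fix v assume "v \<in> scan_times f phi i"
        then obtain m :: int where v: "v = phi i + real_of_int m * f i" unfolding scan_times_def by blast
        show "\<not> (u < v \<and> v \<le> t)"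
        proof
          assume h: "u < v \<and> v \<le> t"
          hence "real_of_int n * f i < real_of_int m * f i" using v unfolding u_def by simp
          hence "n < m" using fip by (simp add: mult_less_cancel_right)
          hence "real_of_int m \<ge> real_of_int n + 1" by linarith
          hence "real_of_int m * f i \<ge> (real_of_int n + 1) * f i" using fip by (simp add: mult_right_mono)
          hence "v \<ge> u + f i" using v unfolding u_def by (simp add: algebra_simps)
          thus False using h ugt by simp
        qed
      qed
      have "u \<in> {a<..<b}" using ule ugt fi tfk tin by auto
      hence Eu: "(N, P) \<in> E u \<longleftrightarrow> \<beta>" using beh by blast
      have "(N, P) \<in> EM i u \<longleftrightarrow> (N, P) \<in> E u" using run iG uscan unfolding monitoring_run_def by blast
      moreover have "(N, P) \<in> EM i t \<longleftrightarrow> (N, P) \<in> EM i u"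
        using run iG ule nos unfolding monitoring_run_def by blast
      ultimately show ?thesis using Eu by simp
    qed
    have snap: "(N, P) \<in> atom_snapshot Gamma EM t \<longleftrightarrow> \<not> \<beta>" using beh tin by blast
    have kk1: "real (k + 1) > real (card Gamma) / 2" unfolding k_def by linarith
    have "k + 1 \<le> card Gamma" using klt lenxs by simp
    hence "real (card Gamma - (k+1)) = real (card Gamma) - real (k+1)" by (simp add: of_nat_diff)
    hence kk: "real (k + 1) > real (card Gamma) / 2" "real (card Gamma - (k+1)) < real (card Gamma) / 2"
      using kk1 by linarith+
    show False
    proof (cases \<beta>)
      case True
      have "{i\<in>Gamma. f i \<le> fk} \<subseteq> {M \<in> Gamma. (N, P) \<in> EM M t}" using agree True by auto
      hence "card {i\<in>Gamma. f i \<le> fk} \<le> card {M \<in> Gamma. (N, P) \<in> EM M t}"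
        using assms(1) by (intro card_mono) auto
      hence "real (card {M \<in> Gamma. (N, P) \<in> EM M t}) > real (card Gamma) / 2"
        using cle kk(1) by linarith
      hence "(N, P) \<in> atom_snapshot Gamma EM t" unfolding atom_snapshot_def by simp
      thus False using snap True by simp
    next
      case False
      have "{M \<in> Gamma. (N, P) \<in> EM M t} \<subseteq> Gamma - {i\<in>Gamma. f i \<le> fk}" using agree False by auto
      hence "card {M \<in> Gamma. (N, P) \<in> EM M t} \<le> card (Gamma - {i\<in>Gamma. f i \<le> fk})"
        using assms(1) by (intro card_mono) auto
      also have "\<dots> = card Gamma - card {i\<in>Gamma. f i \<le> fk}"
        using assms(1) by (intro card_Diff_subset) auto
      also have "\<dots> \<le> card Gamma - (k+1)" using cle by simp
      finally have "real (card {M \<in> Gamma. (N, P) \<in> EM M t}) < real (card Gamma) / 2"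
        using kk(2) by (smt (verit) of_nat_le_iff)
      hence "(N, P) \<notin> atom_snapshot Gamma EM t" unfolding atom_snapshot_def by simp
      thus False using snap False by simp
    qed
  qed
  have part2: "\<exists>phi E EM a b. monitoring_run V Gamma f phi N E EM \<and> error_frame Gamma N E EM P a b
            \<and> b - a = fk" if PV: "P \<in> V" for P
  proof -
    define phi :: "'m \<Rightarrow> real" where "phi = f"
    define E :: "real \<Rightarrow> ('v \<times> 'v) set" where "E = (\<lambda>t. if t > 0 then {(N, P)} else {})"
    define EM :: "'m \<Rightarrow> real \<Rightarrow> ('v \<times> 'v) set" where "EM = (\<lambda>i t. if t \<ge> f i then {(N, P)} else {})"
    have r1: "\<forall>t. E t \<subseteq> V \<times> V" using PV assms(4) unfolding E_def by auto
    have r2: "\<forall>i\<in>Gamma. \<forall>s\<in>scan_times f phi i. \<forall>Q. (N, Q) \<in> EM i s \<longleftrightarrow> (N, Q) \<in> E s"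
    proof (intro ballI allI)
      fix i s Q assume iG: "i \<in> Gamma" and "s \<in> scan_times f phi i"
      then obtain n :: int where s: "s = f i + real_of_int n * f i" unfolding scan_times_def phi_def by blast
      have fip: "f i > 0" using assms(3) iG by auto
      have "s \<ge> f i \<longleftrightarrow> s > 0"
      proof (cases "n \<ge> 0")
        case True
        hence "real_of_int n * f i \<ge> 0" using fip by simp
        thus ?thesis using s fip by simp
      next
        case False
        hence "real_of_int n \<le> -1" by linarith
        hence "real_of_int n * f i \<le> -1 * f i" using fip by (intro mult_right_mono) auto
        thus ?thesis using s fip by simp
      qed
      thus "(N, Q) \<in> EM i s \<longleftrightarrow> (N, Q) \<in> E s" unfolding EM_def E_def by auto
    qed
    have r3: "\<forall>i\<in>Gamma. \<forall>s t. s \<le> t \<and> (\<forall>u\<in>scan_times f phi i. \<not> (s < u \<and> u \<le> t)) \<longrightarrow>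
        (\<forall>Q. (N, Q) \<in> EM i t \<longleftrightarrow> (N, Q) \<in> EM i s)"
    proof (intro ballI allI impI)
      fix i s t Q assume h: "s \<le> t \<and> (\<forall>u\<in>scan_times f phi i. \<not> (s < u \<and> u \<le> t))"
      have "f i \<in> scan_times f phi i" unfolding scan_times_def phi_def
        by (rule CollectI, rule exI[of _ 0]) simp
      hence "\<not> (s < f i \<and> f i \<le> t)" using h by blast
      hence "t \<ge> f i \<longleftrightarrow> s \<ge> f i" using h by auto
      thus "(N, Q) \<in> EM i t \<longleftrightarrow> (N, Q) \<in> EM i s" unfolding EM_def by auto
    qed
    have run: "monitoring_run V Gamma f phi N E EM"
      unfolding monitoring_run_def using r1 r2 r3 by blast
    have "error_frame Gamma N E EM P 0 fk"
      unfolding error_frame_def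
    proof (intro conjI exI[of _ True] ballI)
      show "0 < fk" by (rule fkpos)
      fix t assume t: "t \<in> {0<..<fk}"
      show "(N, P) \<in> E t \<longleftrightarrow> True" using t unfolding E_def by simp
      have "{M \<in> Gamma. (N, P) \<in> EM M t} \<subseteq> {i\<in>Gamma. f i < fk}" using t unfolding EM_def by auto
      hence "card {M \<in> Gamma. (N, P) \<in> EM M t} \<le> card {i\<in>Gamma. f i < fk}"
        using assms(1) by (intro card_mono) auto
      hence "card {M \<in> Gamma. (N, P) \<in> EM M t} \<le> k" using clt by simp
      moreover have "real k \<le> real (card Gamma) / 2" unfolding k_def by linarith
      ultimately have "\<not> real (card {M \<in> Gamma. (N, P) \<in> EM M t}) > real (card Gamma) / 2"
        by (smt (verit) of_nat_le_iff)
      thus "(N, P) \<in> atom_snapshot Gamma EM t \<longleftrightarrow> \<not> True" unfolding atom_snapshot_def by simp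
    qed
    thus ?thesis using run by (intro exI[of _ phi] exI[of _ E] exI[of _ EM] exI[of _ 0] exI[of _ fk]) simp
  qed
  show ?thesis using part1 part2 unfolding fk_def by blast
qed

end
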